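(* Let $n\ge2$ and let $U:=\{(q,p)\in T^*\mathbb{R}^n: q_1+\sum_{i=2}^nq_i^2=\frac14\}$. Then $U$ is a smooth hypersurface in $T^*\mathbb{R}^n$, but its $b$-image $U_b:=\overline{\pi(U\times\{-1,1\})}$ (closure in $W$) is not a smooth hypersurface of $W$.
   Context: Identify $\mathbb{R}^{2n}=T^*\mathbb{R}^n$ with coordinates $(q,p)$. Realize $T^*S^{n-1}=\{(\psi,\zeta)\in\mathbb{R}^n\times\mathbb{R}^n:|\psi|=1,\ \psi\cdot\zeta=0\}$. Let $\widetilde W=\mathbb{R}^2\times T^*S^{n-1}$ with coordinates $(z,P_r,\psi,\zeta)$, $\widetilde Y=\{z=0\}$. Define $f:\widetilde W\setminus\widetilde Y\to\mathbb{R}^{2n}\times\{-1,1\}$ by $f(z,P_r,\psi,\zeta)=\big((2z^{-2}\psi,\ P_r\psi+\tfrac{z^2}{2}\zeta),\operatorname{sgn}z\big)$; it is a diffeomorphism onto $T^*(\mathbb{R}^n\setminus\{0\})\times\{-1,1\}$. Let $W:=\big((\mathbb{R}^{2n}\times\{-1,1\})\sqcup\widetilde W\big)/\sim$ where $w\sim f(w)$ for $w\in\widetilde W\setminus\widetilde Y$, with the quotient topology; $\pi$ denotes the projection. $W$ is a smooth manifold on which $\pi$ restricted to $\mathbb{R}^{2n}\times\{-1,1\}$ and to $\widetilde W$ are diffeomorphisms onto open subsets. *)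

theory Defs
  imports "HOL-Analysis.Analysis"
begin

text \<open>C-infinity on an open set: there is a family of all iterated Frechet derivatives;
  D vs x is the iterated derivative at x applied to the directions in the list vs.\<close>
definition smooth_on :: "'a::euclidean_space set \<Rightarrow> ('a \<Rightarrow> 'b::real_normed_vector) \<Rightarrow> bool" where
  "smooth_on S f \<longleftrightarrow> open S \<and>
     (\<exists>D :: 'a list \<Rightarrow> 'a \<Rightarrow> 'b.
        (\<forall>x\<in>S. D [] x = f x) \<and>
        (\<forall>vs. \<forall>x\<in>S. (D vs has_derivative (\<lambda>h. D (h # vs) x)) (at x)))"

definition diffeo_between :: "'a::euclidean_space set \<Rightarrow> 'a set \<Rightarrow> ('a \<Rightarrow> 'a) \<Rightarrow> ('a \<Rightarrow> 'a) \<Rightarrow> bool" where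
  "diffeo_between V \<Omega> \<phi> \<psi> \<longleftrightarrow> smooth_on V \<phi> \<and> smooth_on \<Omega> \<psi> \<and> \<phi> ` V = \<Omega> \<and>
     (\<forall>x\<in>V. \<psi> (\<phi> x) = x) \<and> (\<forall>y\<in>\<Omega>. \<phi> (\<psi> y) = y)"

definition submanifold :: "nat \<Rightarrow> 'a::euclidean_space set \<Rightarrow> bool" where
  "submanifold k S \<longleftrightarrow>
     (\<forall>x\<in>S. \<exists>V \<Omega> \<phi> \<psi> L. open V \<and> x \<in> V \<and> open \<Omega> \<and> diffeo_between V \<Omega> \<phi> \<psi> \<and>
        subspace L \<and> dim L = k \<and> \<phi> ` (S \<inter> V) = \<Omega> \<inter> L)"

text \<open>T^*R^n = (real^'n) \<times> (real^'n) with coordinates (q,p); the sign component of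
  R^{2n} \<times> {-1,1} is a real number in {-1,1}.  Points of Wtilde are (z, P_r, psi, zeta).\<close>

definition Wt :: "(real \<times> real \<times> (real^'n) \<times> (real^'n)) set" where
  "Wt = {(z, Pr, \<psi>, \<zeta>). norm \<psi> = 1 \<and> \<psi> \<bullet> \<zeta> = 0}"

definition fW :: "real \<times> real \<times> (real^'n) \<times> (real^'n) \<Rightarrow> ((real^'n) \<times> (real^'n)) \<times> real" where
  "fW w = (case w of (z, Pr, \<psi>, \<zeta>) \<Rightarrow>
      (((2 / z\<^sup>2) *\<^sub>R \<psi>, Pr *\<^sub>R \<psi> + (z\<^sup>2 / 2) *\<^sub>R \<zeta>), sgn z))"

type_synonym ('n) Wpre = "(((real^'n) \<times> (real^'n)) \<times> real) + (real \<times> real \<times> (real^'n) \<times> (real^'n))"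

definition Wcar :: "('n::finite) Wpre set" where
  "Wcar = Inl ` (UNIV \<times> {-1, 1}) \<union> Inr ` Wt"

definition Wstep :: "('n::finite) Wpre \<Rightarrow> ('n::finite) Wpre \<Rightarrow> bool" where
  "Wstep a b \<longleftrightarrow> (\<exists>w. w \<in> Wt \<and> fst w \<noteq> 0 \<and> a = Inr w \<and> b = Inl (fW w))"

definition Wsim :: "('n::finite) Wpre \<Rightarrow> ('n::finite) Wpre \<Rightarrow> bool" where
  "Wsim = (\<lambda>a b. Wstep a b \<or> Wstep b a)\<^sup>*\<^sup>*"

definition Wpi :: "('n::finite) Wpre \<Rightarrow> ('n::finite) Wpre set" where
  "Wpi a = {b \<in> Wcar. Wsim a b}"

definition W :: "('n::finite) Wpre set set" where
  "W = Wpi ` Wcar"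

definition W_open :: "('n::finite) Wpre set set \<Rightarrow> bool" where
  "W_open Op \<longleftrightarrow> Op \<subseteq> W \<and>
     openin (top_of_set (UNIV \<times> {-1, 1})) {x \<in> UNIV \<times> {-1, 1}. Wpi (Inl x) \<in> Op} \<and>
     openin (top_of_set Wt) {w \<in> Wt. Wpi (Inr w) \<in> Op}"

definition W_closure :: "('n::finite) Wpre set set \<Rightarrow> ('n::finite) Wpre set set" where
  "W_closure A = {c \<in> W. \<forall>Op. W_open Op \<and> c \<in> Op \<longrightarrow> Op \<inter> A \<noteq> {}}"

text \<open>Smooth hypersurface of W (dim W = 2n), checked in the two charts given by the
  restrictions of pi to R^{2n} \<times> {-1,1} (each sheet) and to Wtilde.  A hypersurface of
  the embedded submanifold Wtilde of R^{2+2n} is a subset of Wtilde which is an embedded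
  submanifold of R^{2+2n} of dimension 2n-1.\<close>
definition W_smooth_hypersurface :: "('n::finite) Wpre set set \<Rightarrow> bool" where
  "W_smooth_hypersurface S \<longleftrightarrow> S \<subseteq> W \<and>
     (\<forall>s\<in>{-1, 1::real}. submanifold (2 * CARD('n) - 1) {x. Wpi (Inl (x, s)) \<in> S}) \<and>
     submanifold (2 * CARD('n) - 1) {w \<in> Wt. Wpi (Inr w) \<in> S}"

text \<open>The hypersurface U, where i1 plays the role of the first coordinate index.\<close>
definition Uset :: "'n \<Rightarrow> ((real^'n) \<times> (real^'n)) set" where
  "Uset i1 = {(q, p). q $ i1 + (\<Sum>i\<in>UNIV - {i1}. (q $ i)\<^sup>2) = 1/4}"

end

theory Submission
  imports Defs
begin

definition Bq :: "'n::finite set \<Rightarrow> (real^'n) \<times> (real^'n) \<Rightarrow> (real^'n) \<times> (real^'n) \<Rightarrow> real" where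
 "Bq J x y = (\<Sum>i\<in>J. fst x $ i * fst y $ i)"

lemma fst_nth_deriv[derivative_intros]:
  fixes i :: "'n::finite" and x :: "(real^'n) \<times> (real^'n)"
  shows "((\<lambda>x. fst x $ i) has_derivative (\<lambda>x. fst x $ i)) (at x)"
proof -
  have "bounded_linear (\<lambda>x::(real^'n) \<times> (real^'n). fst x $ i)"
    using bounded_linear_compose[OF bounded_linear_vec_nth[of i] bounded_linear_fst] by (simp add: o_def)
  then show ?thesis by (rule bounded_linear_imp_has_derivative)
qed

lemma Bq_deriv1: "((\<lambda>x. Bq J h x) has_derivative (\<lambda>k. Bq J h k)) (at x)"
  unfolding Bq_def by (auto intro!: derivative_eq_intros)

lemma Bq_deriv2: "((\<lambda>x. Bq J x h) has_derivative (\<lambda>k. Bq J k h)) (at x)"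
  unfolding Bq_def by (auto intro!: derivative_eq_intros)

lemma Bq_deriv: "((\<lambda>x. Bq J x x) has_derivative (\<lambda>k. Bq J x k + Bq J k x)) (at x)"
  unfolding Bq_def by (auto intro!: derivative_eq_intros simp: sum.distrib sum_distrib_left algebra_simps)

lemma smooth_quad: "smooth_on UNIV (\<lambda>x. x + (Bq J x x + c) *\<^sub>R e)"
proof -
  define D where "D = (\<lambda>vs x. case vs of [] \<Rightarrow> x + (Bq J x x + c) *\<^sub>R e
     | [h] \<Rightarrow> h + (Bq J x h + Bq J h x) *\<^sub>R e
     | [h1,h2] \<Rightarrow> (Bq J h2 h1 + Bq J h1 h2) *\<^sub>R e
     | _ \<Rightarrow> 0)"
  have "(D vs has_derivative (\<lambda>h. D (h # vs) x)) (at x)" for vs x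
  proof (cases vs)
    case Nil
    then show ?thesis unfolding D_def
      by (auto intro!: derivative_eq_intros Bq_deriv)
  next
    case (Cons a l)
    then show ?thesis
    proof (cases l)
      case Nil
      then show ?thesis using Cons unfolding D_def
        by (auto intro!: derivative_eq_intros Bq_deriv1 Bq_deriv2 simp: algebra_simps)
    next
      case (Cons b m)
      then show ?thesis using \<open>vs = a # l\<close> unfolding D_def
        by (cases m) auto
    qed
  qed
  then show ?thesis unfolding smooth_on_def by (intro conjI exI[of _ D]) (auto simp: D_def)
qed

lemma Bq_shift:
  fixes i1 :: "'n::finite"
  shows "Bq (UNIV - {i1}) (x + t *\<^sub>R (axis i1 1, 0)) (x + t *\<^sub>R (axis i1 1, 0)) = Bq (UNIV - {i1}) x x"
  unfolding Bq_def by (intro sum.cong) (auto simp: axis_def)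

lemma part1:
  fixes i1 :: "'n::finite"
  shows "submanifold (2 * CARD('n) - 1) (Uset i1)"
proof -
  define J where "J = UNIV - {i1}"
  define e :: "(real^'n) \<times> (real^'n)" where "e = (axis i1 1, 0)"
  define \<phi> where "\<phi> = (\<lambda>x. x + (Bq J x x + (- 1/4)) *\<^sub>R e)"
  define \<psi> where "\<psi> = (\<lambda>x. x + (Bq J x x + (- 1/4)) *\<^sub>R (- e))"
  define L where "L = {y. e \<bullet> y = 0}"
  have sh: "Bq J (x + t *\<^sub>R e) (x + t *\<^sub>R e) = Bq J x x" for x t
    unfolding J_def e_def by (rule Bq_shift)
  have sh2: "Bq J (x - t *\<^sub>R e) (x - t *\<^sub>R e) = Bq J x x" for x t
    using sh[of x "-t"] by simp
  have psiphi: "\<psi> (\<phi> x) = x" for x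
    unfolding \<phi>_def \<psi>_def using sh by simp
  have phipsi: "\<phi> (\<psi> y) = y" for y
    unfolding \<phi>_def \<psi>_def using sh2 by simp
  have img: "\<phi> ` UNIV = UNIV"
    using phipsi by (metis surj_def)
  have eval: "e \<bullet> \<phi> x = fst x $ i1 + (\<Sum>i\<in>UNIV - {i1}. (fst x $ i)\<^sup>2) - 1/4" for x
    unfolding \<phi>_def e_def J_def Bq_def
    by (simp add: inner_prod_def inner_axis inner_axis' power2_eq_square algebra_simps)
  have Ux: "x \<in> Uset i1 \<longleftrightarrow> \<phi> x \<in> L" for x
    unfolding L_def Uset_def using eval[of x] by (cases x) auto
  have "\<phi> ` (Uset i1 \<inter> UNIV) = UNIV \<inter> L"
  proof (intro equalityI subsetI)
    fix y assume "y \<in> \<phi> ` (Uset i1 \<inter> UNIV)" then show "y \<in> UNIV \<inter> L" using Ux by auto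
  next
    fix y assume "y \<in> UNIV \<inter> L"
    then have "\<psi> y \<in> Uset i1" using Ux[of "\<psi> y"] phipsi by simp
    then show "y \<in> \<phi> ` (Uset i1 \<inter> UNIV)" using phipsi by (metis IntI UNIV_I image_eqI)
  qed
  moreover have "diffeo_between UNIV UNIV \<phi> \<psi>"
  proof -
    have "smooth_on UNIV \<phi>" unfolding \<phi>_def by (rule smooth_quad)
    moreover have "smooth_on UNIV \<psi>" unfolding \<psi>_def by (rule smooth_quad)
    ultimately show ?thesis unfolding diffeo_between_def using psiphi phipsi img by blast
  qed
  moreover have "subspace L" unfolding L_def by (rule subspace_hyperplane)
  moreover have "dim L = 2 * CARD('n) - 1"
  proof -
    have "e \<noteq> 0" unfolding e_def by (simp add: zero_prod_def axis_eq_0_iff)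
    then show ?thesis unfolding L_def by (simp add: dim_hyperplane)
  qed
  ultimately show ?thesis unfolding submanifold_def
    by (intro ballI exI[of _ UNIV] exI[of _ "UNIV"] exI[of _ \<phi>] exI[of _ \<psi>] exI[of _ L]) auto
qed



lemma vd_quot:
  fixes f :: "real \<Rightarrow> 'a::real_normed_vector"
  assumes "(f has_derivative (\<lambda>t. t *\<^sub>R w)) (at 0)"
  shows "((\<lambda>t. (f t - f 0) /\<^sub>R t) \<longlongrightarrow> w) (at 0)"
proof -
  have "((\<lambda>y. norm (f y - f 0 - (y - 0) *\<^sub>R w) / norm (y - 0)) \<longlongrightarrow> 0) (at 0)"
    using assms unfolding has_derivative_iff_norm by blast
  then have l: "((\<lambda>y. norm (f y - f 0 - y *\<^sub>R w) / \<bar>y\<bar>) \<longlongrightarrow> 0) (at 0)" by simp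
  have eq: "norm ((f y - f 0) /\<^sub>R y - w) = norm (f y - f 0 - y *\<^sub>R w) / \<bar>y\<bar>" if "y \<noteq> 0" for y
  proof -
    have "(f y - f 0) /\<^sub>R y - w = (f y - f 0 - y *\<^sub>R w) /\<^sub>R y"
      using that by (simp add: scaleR_diff_right)
    then show ?thesis by (simp add: divide_inverse_commute)
  qed
  have "((\<lambda>y. norm ((f y - f 0) /\<^sub>R y - w)) \<longlongrightarrow> 0) (at 0)"
    using l by (rule Lim_transform_eventually) (auto simp: eventually_at_filter eq)
  then have "((\<lambda>y. (f y - f 0) /\<^sub>R y - w) \<longlongrightarrow> 0) (at 0)"
    by (simp add: tendsto_norm_zero_iff)
  from tendsto_add[OF this tendsto_const[of w]] show ?thesis by simp
qed

lemma tangent_in: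
  fixes \<phi> :: "'a::euclidean_space \<Rightarrow> 'a" and p :: "real \<Rightarrow> 'a"
  assumes phid: "(\<phi> has_derivative F) (at x0)"
    and img: "\<phi> ` (S \<inter> V) \<subseteq> L" and L: "subspace L" and V: "open V" "x0 \<in> V" "x0 \<in> S"
    and pd: "(p has_derivative (\<lambda>t. t *\<^sub>R v)) (at 0)" and p0: "p 0 = x0"
    and ev: "\<forall>\<^sub>F t in at 0. p t \<in> S"
  shows "F v \<in> L"
proof -
  have "isCont p 0" using pd by (rule has_derivative_continuous)
  then have "\<forall>\<^sub>F t in at 0. p t \<in> V"
    using V p0 by (metis continuous_at_imp_continuous_within continuous_within_tendsto_compose'
        eventually_at_topological isCont_def topological_tendstoD)
  with ev have ev2: "\<forall>\<^sub>F t in at 0. p t \<in> S \<inter> V" by eventually_elim auto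
  have lin: "linear F" using phid has_derivative_linear by blast
  have "(\<phi> \<circ> p has_derivative F \<circ> (\<lambda>t. t *\<^sub>R v)) (at 0)"
    using diff_chain_at[OF pd] phid p0 by simp
  moreover have "F \<circ> (\<lambda>t. t *\<^sub>R v) = (\<lambda>t. t *\<^sub>R F v)"
    using lin by (auto simp: linear_scale o_def)
  ultimately have "(\<phi> \<circ> p has_derivative (\<lambda>t. t *\<^sub>R F v)) (at 0)" by simp
  then have lim: "((\<lambda>t. ((\<phi> \<circ> p) t - (\<phi> \<circ> p) 0) /\<^sub>R t) \<longlongrightarrow> F v) (at 0)" by (rule vd_quot)
  have x0L: "\<phi> x0 \<in> L" using img V by auto
  have "\<forall>\<^sub>F t in at 0. ((\<phi> \<circ> p) t - (\<phi> \<circ> p) 0) /\<^sub>R t \<in> L"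
    using ev2
  proof eventually_elim
    case (elim t)
    then have "\<phi> (p t) \<in> L" using img by auto
    then show ?case using x0L p0 L by (simp add: subspace_diff subspace_scale)
  qed
  then show ?thesis using Lim_in_closed_set[OF closed_subspace[OF L] _ _ lim] by simp
qed

lemma smooth_deriv:
  assumes "smooth_on V f" "x \<in> V"
  shows "\<exists>F. (f has_derivative F) (at x)"
proof -
  obtain D where D: "\<forall>x\<in>V. D [] x = f x" "\<forall>vs. \<forall>x\<in>V. (D vs has_derivative (\<lambda>h. D (h # vs) x)) (at x)"
    and o: "open V" using assms unfolding smooth_on_def by blast
  have "(D [] has_derivative (\<lambda>h. D [h] x)) (at x)" using D assms by blast
  then have "(f has_derivative (\<lambda>h. D [h] x)) (at x)"
    by (rule has_derivative_transform_within_open[OF _ o assms(2)]) (use D in auto)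
  then show ?thesis by blast
qed



lemma Wsim_sym: "Wsim a b \<Longrightarrow> Wsim b a"
  unfolding Wsim_def
proof (induction rule: rtranclp_induct)
  case base then show ?case by simp
next
  case (step y z)
  have "(\<lambda>a b. Wstep a b \<or> Wstep b a) z y" using step(2) by blast
  then show ?case using step.IH by (rule converse_rtranclp_into_rtranclp)
qed

lemma Wsim_trans: "Wsim a b \<Longrightarrow> Wsim b c \<Longrightarrow> Wsim a c"
  unfolding Wsim_def by simp

lemma Wpi_eq: "Wsim a b \<Longrightarrow> Wpi a = Wpi b"
  unfolding Wpi_def using Wsim_sym Wsim_trans by blast

lemma Wpi_Inr_Inl: "w \<in> Wt \<Longrightarrow> fst w \<noteq> 0 \<Longrightarrow> Wpi (Inr w) = Wpi (Inl (fW w))"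
  unfolding Wsim_def Wstep_def by (intro Wpi_eq[unfolded Wsim_def Wstep_def] r_into_rtranclp) blast

lemma sub_closure: "A \<subseteq> W \<Longrightarrow> A \<subseteq> W_closure A"
  unfolding W_closure_def by auto

lemma A_sub_W: "Wpi ` Inl ` (X \<times> {-1, 1}) \<subseteq> (W :: 'n::finite Wpre set set)"
  unfolding W_def Wcar_def by auto

lemma inA:
  fixes w :: "real \<times> real \<times> (real^'n::finite) \<times> (real^'n)"
  assumes "w \<in> Wt" "fst w \<noteq> 0" "fst (fW w) \<in> X"
  shows "Wpi (Inr w) \<in> Wpi ` Inl ` (X \<times> {-1, 1})"
proof -
  have "snd (fW w) \<in> {-1, 1}" using assms(2) by (cases w) (auto simp: fW_def sgn_real_def)
  then have "fW w \<in> X \<times> {-1,1}" using assms(3) by (cases "fW w") auto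
  then show ?thesis using Wpi_Inr_Inl[OF assms(1,2)] by auto
qed

definition psic :: "'n::finite \<Rightarrow> 'n \<Rightarrow> real \<Rightarrow> real \<Rightarrow> real^'n" where
  "psic i1 j \<sigma> t = (-(1 - t\<^sup>2/4)) *\<^sub>R axis i1 1 + (\<sigma> * t * sqrt (1/2 - t\<^sup>2/16)) *\<^sub>R axis j 1"

lemma psic_nth: "psic i1 j \<sigma> t $ i = (if i = i1 then -(1 - t\<^sup>2/4) else 0) + (if i = j then \<sigma> * t * sqrt (1/2 - t\<^sup>2/16) else 0)"
  unfolding psic_def by (simp add: axis_def)

lemma psic_inner: assumes "j \<noteq> i1" "\<sigma>\<^sup>2 = 1" "t\<^sup>2 \<le> 8"
  shows "psic i1 j \<sigma> t \<bullet> psic i1 j \<sigma> t = 1"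
proof -
  have s: "(sqrt (1/2 - t\<^sup>2/16))\<^sup>2 = 1/2 - t\<^sup>2/16" using assms(3) by simp
  have "psic i1 j \<sigma> t \<bullet> psic i1 j \<sigma> t = (1 - t\<^sup>2/4)\<^sup>2 + \<sigma>\<^sup>2 * t\<^sup>2 * (sqrt (1/2 - t\<^sup>2/16))\<^sup>2"
    unfolding psic_def using assms(1)
    by (simp add: inner_add_left inner_add_right inner_axis_axis power2_eq_square algebra_simps)
  also have "\<dots> = 1" using s assms(2) by (simp add: power2_eq_square field_simps)
  finally show ?thesis .
qed

lemma psic_norm: assumes "j \<noteq> i1" "\<sigma>\<^sup>2 = 1" "t\<^sup>2 \<le> 8"
  shows "norm (psic i1 j \<sigma> t) = 1"
  using psic_inner[OF assms] by (simp add: norm_eq_sqrt_inner)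

lemma psic_U: assumes "j \<noteq> i1" "\<sigma>\<^sup>2 = 1" "t\<^sup>2 \<le> 8" "t \<noteq> 0"
  shows "fst (fW (t, Pr, psic i1 j \<sigma> t, \<zeta>)) \<in> Uset i1"
proof -
  define q where "q = (2 / t\<^sup>2) *\<^sub>R psic i1 j \<sigma> t"
  have s: "(sqrt (1/2 - t\<^sup>2/16))\<^sup>2 = 1/2 - t\<^sup>2/16" using assms(3) by simp
  have sum: "(\<Sum>i\<in>UNIV - {i1}. (q $ i)\<^sup>2) = (q $ j)\<^sup>2"
  proof -
    have "(\<Sum>i\<in>UNIV - {i1}. (q $ i)\<^sup>2) = (\<Sum>i\<in>UNIV - {i1}. if i = j then (q $ j)\<^sup>2 else 0)"
      by (intro sum.cong) (auto simp: q_def psic_nth)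
    also have "\<dots> = (q $ j)\<^sup>2" using assms(1) by (simp add: sum.delta)
    finally show ?thesis .
  qed
  have qi: "q $ i1 = (2/t\<^sup>2) * (-(1 - t\<^sup>2/4))" using assms(1) by (simp add: q_def psic_nth)
  have qj: "(q $ j)\<^sup>2 = (2/t\<^sup>2)\<^sup>2 * t\<^sup>2 * (1/2 - t\<^sup>2/16)"
  proof -
    have "q $ j = (2/t\<^sup>2) * (\<sigma> * t * sqrt (1/2 - t\<^sup>2/16))" using assms(1) by (simp add: q_def psic_nth)
    then have "(q $ j)\<^sup>2 = (2/t\<^sup>2)\<^sup>2 * \<sigma>\<^sup>2 * t\<^sup>2 * (sqrt (1/2 - t\<^sup>2/16))\<^sup>2"
      by (simp only: power_mult_distrib)
    then show ?thesis using s assms(2) by simp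
  qed
  have "q $ i1 + (q $ j)\<^sup>2 = 1/4"
    unfolding qi qj using assms(4)
    by (simp add: power2_eq_square field_simps)
  then show ?thesis unfolding fW_def Uset_def using sum q_def by simp
qed


lemma inCl:
  fixes w :: "real \<times> real \<times> (real^'n::finite) \<times> (real^'n)"
  assumes "w \<in> Wt" "fst w \<noteq> 0" "fst (fW w) \<in> X"
  shows "Wpi (Inr w) \<in> W_closure (Wpi ` Inl ` (X \<times> {-1, 1}))"
  using inA[OF assms] sub_closure[OF A_sub_W] by blast

lemma base_in:
  fixes i1 j :: "'n::finite"
  assumes j: "j \<noteq> i1" and z: "\<zeta> $ i1 = 0"
  shows "Wpi (Inr (0, Pr, - axis i1 1, \<zeta>)) \<in> W_closure (Wpi ` Inl ` (Uset i1 \<times> {-1, 1}))"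
proof -
  define x :: "real \<times> real \<times> (real^'n) \<times> (real^'n)" where "x = (0, Pr, - axis i1 1, \<zeta>)"
  have xW: "x \<in> Wt" unfolding x_def Wt_def using z by (simp add: inner_axis')
  define A where "A = (Wpi ` Inl ` (Uset i1 \<times> {-1, 1}) :: 'n Wpre set set)"
  define ps where "ps = (\<lambda>t. psic i1 j 1 t)"
  define zt where "zt = (\<lambda>t. \<zeta> - (\<zeta> \<bullet> ps t) *\<^sub>R ps t)"
  define cw where "cw = (\<lambda>t. (t, Pr, ps t, zt t))"
  have cw0: "cw 0 = x" unfolding cw_def x_def zt_def ps_def psic_def using z by (simp add: inner_axis)
  have lim0: "(cw \<longlongrightarrow> cw 0) (at 0)" unfolding cw_def zt_def ps_def psic_def
    by (intro tendsto_intros) simp_all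
  have cwW: "cw t \<in> Wt" if "t\<^sup>2 \<le> 8" for t
  proof -
    have n: "ps t \<bullet> ps t = 1" unfolding ps_def using psic_inner[OF j, of 1 t] that by simp
    then have "norm (ps t) = 1" by (simp add: norm_eq_sqrt_inner)
    moreover have "ps t \<bullet> zt t = 0" unfolding zt_def using n by (simp add: inner_diff_right inner_commute)
    ultimately show ?thesis unfolding cw_def Wt_def by simp
  qed
  have cwA: "Wpi (Inr (cw t)) \<in> A" if "t\<^sup>2 \<le> 8" "t \<noteq> 0" for t
    unfolding A_def
    by (rule inA[OF cwW[OF that(1)]]) (use that psic_U[OF j, of 1 t] in \<open>auto simp: cw_def ps_def\<close>)
  have "Wpi (Inr x) \<in> W" unfolding W_def Wcar_def using xW by auto
  moreover have "Op \<inter> A \<noteq> {}" if op: "W_open Op" "Wpi (Inr x) \<in> Op" for Op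
  proof -
    have "openin (top_of_set Wt) {w \<in> Wt. Wpi (Inr w) \<in> Op}" using op(1) unfolding W_open_def by blast
    then obtain e where e: "e > 0" "\<And>w. w \<in> Wt \<Longrightarrow> dist w x < e \<Longrightarrow> Wpi (Inr w) \<in> Op"
      using xW op(2) unfolding openin_euclidean_subtopology_iff by blast
    have ev1: "\<forall>\<^sub>F t in at 0. dist (cw t) x < e" using lim0 cw0 e(1) by (simp add: tendsto_iff)
    have ev2: "\<forall>\<^sub>F t in at (0::real). t \<noteq> 0 \<and> t\<^sup>2 \<le> 8"
    proof -
      have "((\<lambda>t::real. t\<^sup>2) \<longlongrightarrow> 0\<^sup>2) (at 0)" by (intro tendsto_intros)
      then have "\<forall>\<^sub>F t in at (0::real). t\<^sup>2 < 8" by (rule order_tendstoD) simp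
      moreover have "\<forall>\<^sub>F t in at (0::real). t \<noteq> 0" by (simp add: eventually_at_filter)
      ultimately show ?thesis by eventually_elim simp
    qed
    obtain t where "dist (cw t) x < e" "t \<noteq> 0" "t\<^sup>2 \<le> 8"
      using eventually_happens'[OF trivial_limit_at eventually_conj[OF ev1 ev2]] by blast
    then have "Wpi (Inr (cw t)) \<in> Op \<inter> A" using e cwW cwA by blast
    then show ?thesis by blast
  qed
  ultimately show ?thesis unfolding W_closure_def A_def x_def by blast
qed



lemma part2:
  fixes i1 :: "'n::finite"
  assumes card: "CARD('n) \<ge> 2"
  shows "\<not> W_smooth_hypersurface (W_closure (Wpi ` Inl ` (Uset i1 \<times> {-1, 1})) :: 'n Wpre set set)"
proof
  define Cl where "Cl = (W_closure (Wpi ` Inl ` (Uset i1 \<times> {-1, 1})) :: 'n Wpre set set)"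
  define S where "S = {w \<in> Wt. Wpi (Inr w) \<in> Cl}"
  assume "W_smooth_hypersurface (W_closure (Wpi ` Inl ` (Uset i1 \<times> {-1, 1})) :: 'n Wpre set set)"
  then have sm: "submanifold (2 * CARD('n) - 1) S" unfolding W_smooth_hypersurface_def S_def Cl_def by blast
  obtain j0 :: 'n where j0: "j0 \<noteq> i1"
  proof -
    have "UNIV \<noteq> {i1}"
    proof
      assume eq: "UNIV = {i1}"
      have "CARD('n) = card {i1}" by (simp only: eq)
      then have "CARD('n) = 1" by simp
      with card show False by simp
    qed
    then show ?thesis using that by blast
  qed
  define e1 :: "real^'n" where "e1 = axis i1 1"
  define x0 :: "real \<times> real \<times> (real^'n) \<times> (real^'n)" where "x0 = (0, 0, -e1, 0)"
  have base: "(0, Pr, -e1, \<zeta>) \<in> S" if "\<zeta> $ i1 = 0" for Pr \<zeta>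
  proof -
    have "(0, Pr, -e1, \<zeta>) \<in> Wt" unfolding Wt_def e1_def using that by (simp add: inner_axis')
    then show ?thesis using base_in[OF j0 that, of Pr] unfolding S_def Cl_def e1_def by simp
  qed
  have x0S: "x0 \<in> S" unfolding x0_def using base[of 0 0] by simp
  obtain V \<Omega> \<phi> \<psi> L where V: "open V" "x0 \<in> V" and \<Omega>: "open \<Omega>" and dif: "diffeo_between V \<Omega> \<phi> \<psi>"
     and L: "subspace L" "dim L = 2 * CARD('n) - 1" and img: "\<phi> ` (S \<inter> V) = \<Omega> \<inter> L"
    using sm x0S unfolding submanifold_def by meson
  have smp: "smooth_on V \<phi>" and sms: "smooth_on \<Omega> \<psi>" and im: "\<phi> ` V = \<Omega>" and inv: "\<And>x. x \<in> V \<Longrightarrow> \<psi> (\<phi> x) = x"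
    using dif unfolding diffeo_between_def by auto
  obtain F where F: "(\<phi> has_derivative F) (at x0)" using smooth_deriv[OF smp V(2)] by blast
  have y0: "\<phi> x0 \<in> \<Omega>" using im V by auto
  obtain G where G: "(\<psi> has_derivative G) (at (\<phi> x0))" using smooth_deriv[OF sms y0] by blast
  have c1: "(\<psi> \<circ> \<phi> has_derivative G \<circ> F) (at x0)" by (rule diff_chain_at[OF F G])
  have c2: "(\<psi> \<circ> \<phi> has_derivative (\<lambda>h. h)) (at x0)"
    by (rule has_derivative_transform_within_open[OF has_derivative_ident V(1) V(2)]) (simp add: inv)
  have GF: "G (F v) = v" for v using has_derivative_unique[OF c1 c2] by (metis comp_apply)
  define M where "M = G ` L"
  have linG: "linear G" using G has_derivative_linear by blast
  have M: "subspace M" unfolding M_def by (rule linear_subspace_image[OF linG L(1)])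
  have dimM: "dim M \<le> 2 * CARD('n) - 1" unfolding M_def using dim_image_le[OF linG, of L] L(2) by simp
  have tan: "v \<in> M" if "(p has_derivative (\<lambda>t. t *\<^sub>R v)) (at 0)" "p 0 = x0" "\<forall>\<^sub>F t in at 0. p t \<in> S" for p v
  proof -
    have "F v \<in> L" using img x0S V by (intro tangent_in[OF F _ L(1) V(1) V(2) x0S that]) auto
    then show ?thesis unfolding M_def using GF[of v] by (metis image_eqI)
  qed
  have v1: "(0, 1, 0, 0) \<in> M"
  proof (rule tan[of "\<lambda>t. (0, t, -e1, 0)"])
    show "((\<lambda>t. (0::real, t, -e1, 0::real^'n)) has_derivative (\<lambda>t. t *\<^sub>R (0, 1, 0, 0))) (at 0)"
      by (rule derivative_eq_intros refl)+ (simp add: fun_eq_iff)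
    show "(0::real, 0::real, -e1, 0::real^'n) = x0" by (simp add: x0_def)
    show "\<forall>\<^sub>F t in at 0. (0, t, -e1, 0) \<in> S" using base[of 0] by simp
  qed
  have v2: "(0, 0, 0, axis j 1) \<in> M" if j: "j \<noteq> i1" for j
  proof (rule tan[of "\<lambda>t. (0, 0, -e1, t *\<^sub>R axis j 1)"])
    show "((\<lambda>t. (0::real, 0::real, -e1, t *\<^sub>R axis j 1)) has_derivative (\<lambda>t. t *\<^sub>R (0, 0, 0, axis j 1))) (at 0)"
      by (rule derivative_eq_intros refl)+ (simp add: fun_eq_iff)
    show "(0::real, 0::real, -e1, 0 *\<^sub>R axis j 1) = x0" by (simp add: x0_def)
    show "\<forall>\<^sub>F t in at 0. (0, 0, -e1, t *\<^sub>R axis j 1) \<in> S" using base j by (simp add: axis_def)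
  qed
  have v3: "(1, 0, (\<sigma> * sqrt (1/2)) *\<^sub>R axis j 1, 0) \<in> M" if j: "j \<noteq> i1" and s: "\<sigma>\<^sup>2 = 1" for j \<sigma>
  proof (rule tan[of "\<lambda>t. (t, 0, psic i1 j \<sigma> t, 0)"])
    show "((\<lambda>t. (t, 0::real, psic i1 j \<sigma> t, 0::real^'n)) has_derivative (\<lambda>t. t *\<^sub>R (1, 0, (\<sigma> * sqrt (1/2)) *\<^sub>R axis j 1, 0))) (at 0)"
      unfolding psic_def
      by (auto intro!: derivative_eq_intros simp: fun_eq_iff)
    show "(0, 0::real, psic i1 j \<sigma> 0, 0::real^'n) = x0" by (simp add: x0_def psic_def e1_def)
    show "\<forall>\<^sub>F t in at 0. (t, 0, psic i1 j \<sigma> t, 0) \<in> S"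
    proof -
      have "((\<lambda>t::real. t\<^sup>2) \<longlongrightarrow> 0\<^sup>2) (at 0)" by (intro tendsto_intros)
      then have "\<forall>\<^sub>F t in at (0::real). t\<^sup>2 < 8" by (rule order_tendstoD) simp
      moreover have "\<forall>\<^sub>F t in at (0::real). t \<noteq> 0" by (simp add: eventually_at_filter)
      ultimately show ?thesis
      proof eventually_elim
        case (elim t)
        then have W: "(t, 0, psic i1 j \<sigma> t, 0) \<in> Wt" unfolding Wt_def using psic_norm[OF j s, of t] by simp
        have "Wpi (Inr (t, 0, psic i1 j \<sigma> t, 0)) \<in> Cl" unfolding Cl_def
          by (rule inCl[OF W]) (use elim psic_U[OF j s, of t] in auto)
        then show ?case using W unfolding S_def by simp
      qed
    qed
  qed
  define J where "J = UNIV - {i1}"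
  define bz where "bz = ((1::real), (0::real), (0::real^'n), (0::real^'n))"
  define bp where "bp = ((0::real), (1::real), (0::real^'n), (0::real^'n))"
  define bs where "bs = (\<lambda>j::'n. ((0::real), (0::real), axis j (1::real), (0::real^'n)))"
  define bt where "bt = (\<lambda>j::'n. ((0::real), (0::real), (0::real^'n), axis j (1::real)))"
  define up where "up = (\<lambda>j::'n. ((1::real), (0::real), (1 * sqrt (1/2)) *\<^sub>R axis j (1::real), (0::real^'n)))"
  define um where "um = (\<lambda>j::'n. ((1::real), (0::real), (-1 * sqrt (1/2)) *\<^sub>R axis j (1::real), (0::real^'n)))"
  have upM: "up j \<in> M" "um j \<in> M" if "j \<noteq> i1" for j
    using v3[OF that, of 1] v3[OF that, of "-1"] unfolding up_def um_def by simp_all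
  have "bz = (1/2) *\<^sub>R (up j0 + um j0)" by (simp add: bz_def up_def um_def)
  then have bzM: "bz \<in> M" using upM[OF j0] M by (metis subspace_add subspace_scale)
  have bsM: "bs j \<in> M" if "j \<noteq> i1" for j
  proof -
    have "bs j = (1 / (2 * sqrt (1/2))) *\<^sub>R (up j - um j)"
      by (simp add: bs_def up_def um_def scaleR_diff_right[symmetric] scaleR_scaleR)
    then show ?thesis using upM[OF that] M by (metis subspace_diff subspace_scale)
  qed
  define B where "B = insert bz (insert bp (bs ` J \<union> bt ` J))"
  have bpM: "bp \<in> M" using v1 by (simp add: bp_def)
  have btM: "bt j \<in> M" if "j \<noteq> i1" for j using v2[OF that] by (simp add: bt_def)
  have BM: "B \<subseteq> M" unfolding B_def J_def using bzM bsM bpM btM by blast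
  have BB: "B \<subseteq> Basis" unfolding B_def bz_def bp_def bs_def bt_def
    by (auto simp: Basis_prod_def zero_prod_def axis_in_Basis_iff)
  have indB: "independent B" using BB independent_Basis independent_mono by blast
  have cardJ: "card J = CARD('n) - 1" unfolding J_def by (simp add: card_Diff_singleton)
  have "card (bs ` J) = card J" unfolding bs_def by (rule card_image) (auto simp: inj_on_def axis_eq_axis)
  moreover have "card (bt ` J) = card J" unfolding bt_def by (rule card_image) (auto simp: inj_on_def axis_eq_axis)
  moreover have "bs ` J \<inter> bt ` J = {}" unfolding bs_def bt_def by (auto simp: axis_eq_0_iff)
  ultimately have c1: "card (bs ` J \<union> bt ` J) = 2 * card J" by (simp add: card_Un_disjoint)
  have "bp \<notin> bs ` J \<union> bt ` J" "bz \<notin> insert bp (bs ` J \<union> bt ` J)" unfolding bp_def bz_def bs_def bt_def by auto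
  then have "card B = 2 * card J + 2" unfolding B_def using c1 by simp
  then have "card B = 2 * CARD('n)" using cardJ card by simp
  moreover have "card B \<le> dim M" by (rule independent_card_le_dim[OF BM indB])
  ultimately show False using dimM card by simp
qed

theorem lemmaB1:
  fixes i1 :: "'n::finite"
  assumes "CARD('n) \<ge> 2"
  shows "submanifold (2 * CARD('n) - 1) (Uset i1)
    \<and> \<not> W_smooth_hypersurface (W_closure (Wpi ` Inl ` (Uset i1 \<times> {-1, 1})) :: 'n Wpre set set)"
  using part1[of i1] part2[OF assms, of i1] by blast

end
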